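(* In the Baxter monoid ${\mathsf{baxt}}$, the relation $\sim_o$ coincides with $\equiv_{\mathrm{ev}}$: for $s,t\in{\mathsf{baxt}}$, there exist $g,h\in{\mathsf{baxt}}$ with $sg=gt$ and $hs=th$ if and only if $s$ and $t$ have the same evaluation.
   Context: Let $\mathcal{A}=\{1<2<3<\cdots\}$ be the ordered alphabet of positive integers. For a monoid $M$ and $x,y\in M$, write $x\sim_o y$ iff there exist $g,h\in M$ with $xg=gy$ and $hx=yh$. The evaluation of a word $w$ is the tuple $(|w|_a)_{a}$ giving the number of occurrences of each letter $a$; the monoid below is defined by evaluation-preserving relations, so the evaluation of an element is well defined, and $s\equiv_{\mathrm{ev}} t$ means $s$ and $t$ have the same evaluation. The Baxter monoid ${\mathsf{baxt}}$ is $\mathcal{A}^*$ modulo the congruence generated by the relations $cudavb=cuadvb$ for letters $a\le b<c\le d$ and words $u,v\in\mathcal{A}^*$, and $budavc=buadvc$ for letters $a<b\le c<d$ and words $u,v\in\mathcal{A}^*$. (A known fact that may be used: if $p,q\in\mathcal{A}^*$ have the same evaluation then $ppq=pqq$ and $qpp=qqp$ in ${\mathsf{baxt}}$.) *)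

theory Defs
  imports Main
begin

definition is_word :: "nat list \<Rightarrow> bool" where
  "is_word w \<longleftrightarrow> (\<forall>a\<in>set w. 0 < a)"

inductive baxt_step :: "nat list \<Rightarrow> nat list \<Rightarrow> bool" where
  rel1: "a \<le> b \<Longrightarrow> b < c \<Longrightarrow> c \<le> d \<Longrightarrow>
     baxt_step (c # u @ [d, a] @ v @ [b]) (c # u @ [a, d] @ v @ [b])"
| rel2: "a < b \<Longrightarrow> b \<le> c \<Longrightarrow> c < d \<Longrightarrow>
     baxt_step (b # u @ [d, a] @ v @ [c]) (b # u @ [a, d] @ v @ [c])"

inductive baxt_eq :: "nat list \<Rightarrow> nat list \<Rightarrow> bool" where
  step: "baxt_step x y \<Longrightarrow> baxt_eq (p @ x @ q) (p @ y @ q)"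
| refl: "baxt_eq x x"
| sym: "baxt_eq x y \<Longrightarrow> baxt_eq y x"
| trans: "baxt_eq x y \<Longrightarrow> baxt_eq y z \<Longrightarrow> baxt_eq x z"

definition ev :: "nat list \<Rightarrow> nat \<Rightarrow> nat" where
  "ev w a = count_list w a"

end

theory Submission
  imports Defs "HOL-Library.Multiset"
begin

lemma step_mset: "baxt_step x y \<Longrightarrow> mset x = mset y"
  by (induction rule: baxt_step.induct) (simp_all add: union_ac)

lemma eq_mset: "baxt_eq x y \<Longrightarrow> mset x = mset y"
  by (induction rule: baxt_eq.induct) (auto dest: step_mset)

lemma swap_lt:
  assumes "y < x" "x \<in> set L" "y \<in> set R"
  shows "baxt_eq (L @ [x,y] @ R) (L @ [y,x] @ R)"
proof -
  obtain L1 L2 where L: "L = L1 @ x # L2" using assms(2) by (metis split_list)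
  obtain R1 R2 where R: "R = R1 @ y # R2" using assms(3) by (metis split_list)
  have "baxt_step (x # L2 @ [x,y] @ R1 @ [y]) (x # L2 @ [y,x] @ R1 @ [y])"
    using assms(1) by (intro baxt_step.rel1) auto
  from baxt_eq.step[OF this, of L1 R2] show ?thesis by (simp add: L R)
qed

lemma swap:
  assumes "max x y \<in> set L" "min x y \<in> set R"
  shows "baxt_eq (L @ [x,y] @ R) (L @ [y,x] @ R)"
proof (cases x y rule: linorder_cases)
  case less
  then show ?thesis using swap_lt[of x y L R] assms by (auto intro: baxt_eq.sym simp: max_def min_def)
next
  case equal then show ?thesis by (simp add: baxt_eq.refl)
next
  case greater
  then show ?thesis using swap_lt[of y x L R] assms by (auto simp: max_def min_def)
qed

lemma move:
  assumes "set (x # A) \<subseteq> set L" "set (x # A) \<subseteq> set R"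
  shows "baxt_eq (L @ A @ [x] @ R) (L @ [x] @ A @ R)"
  using assms
proof (induction A arbitrary: L)
  case Nil then show ?case by (simp add: baxt_eq.refl)
next
  case (Cons a A)
  have 1: "baxt_eq ((L @ [a]) @ A @ [x] @ R) ((L @ [a]) @ [x] @ A @ R)"
    using Cons by (intro Cons.IH) auto
  have 2: "baxt_eq (L @ [a,x] @ (A @ R)) (L @ [x,a] @ (A @ R))"
    using Cons.prems by (intro swap) (auto simp: max_def min_def)
  show ?case using baxt_eq.trans[OF 1] 2 by simp
qed

lemma perm:
  assumes "mset m = mset m'" "set m \<subseteq> set L" "set m \<subseteq> set R"
  shows "baxt_eq (L @ m @ R) (L @ m' @ R)"
  using assms
proof (induction m arbitrary: m' L)
  case Nil then show ?case by (simp add: baxt_eq.refl)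
next
  case (Cons x m1)
  have "x \<in> set m'" using Cons.prems(1) by (metis list.set_intros(1) set_mset_mset)
  then obtain A B where m': "m' = A @ x # B" by (metis split_list)
  have ms: "mset m1 = mset (A @ B)" using Cons.prems(1) m' by simp
  have sA: "set (x # A) \<subseteq> set m'" using m' by auto
  have sm: "set m' = set (x # m1)" using Cons.prems(1) by (metis set_mset_mset)
  have 1: "baxt_eq ((L @ [x]) @ m1 @ R) ((L @ [x]) @ (A @ B) @ R)"
    using Cons.prems ms by (intro Cons.IH) auto
  have 2: "baxt_eq (L @ A @ [x] @ (B @ R)) (L @ [x] @ A @ (B @ R))"
    using Cons.prems sA sm by (intro move) auto
  have h1: "baxt_eq (L @ x # m1 @ R) (L @ [x] @ A @ B @ R)" using 1 by simp
  have 3: "baxt_eq (L @ x # m1 @ R) (L @ A @ [x] @ B @ R)"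
    using baxt_eq.trans[OF h1 baxt_eq.sym[OF 2]] .
  show ?case unfolding m' using 3 by simp
qed

theorem mainTheorem10:
  assumes "is_word s" and "is_word t"
  shows "(\<exists>g h. is_word g \<and> is_word h \<and>
            baxt_eq (s @ g) (g @ t) \<and> baxt_eq (h @ s) (t @ h))
         \<longleftrightarrow> ev s = ev t"
proof
  assume "\<exists>g h. is_word g \<and> is_word h \<and>
            baxt_eq (s @ g) (g @ t) \<and> baxt_eq (h @ s) (t @ h)"
  then obtain g where "baxt_eq (s @ g) (g @ t)" by blast
  then have "mset s = mset t" using eq_mset by fastforce
  then show "ev s = ev t" unfolding ev_def by (metis count_mset)
next
  assume "ev s = ev t"
  then have ms: "mset s = mset t" unfolding ev_def
    by (metis count_mset multiset_eqI)
  have st: "set s = set t" using ms by (metis set_mset_mset)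
  have 1: "baxt_eq (s @ s @ t) (s @ t @ t)" using perm[OF ms] st by auto
  have 2: "baxt_eq (t @ s @ s) (t @ t @ s)" using perm[OF ms, of t s] st by auto
  have "is_word (s @ t)" "is_word (t @ s)" using assms by (auto simp: is_word_def)
  moreover have "baxt_eq (s @ (s @ t)) ((s @ t) @ t)" using 1 by simp
  moreover have "baxt_eq ((t @ s) @ s) (t @ (t @ s))" using 2 by simp
  ultimately show "\<exists>g h. is_word g \<and> is_word h \<and>
            baxt_eq (s @ g) (g @ t) \<and> baxt_eq (h @ s) (t @ h)" by blast
qed

end
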